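(* Let $\tau \ge 0$ be rational and let $(G,k)$ be an instance of $\tau$-Bounded-Density Edge Deletion, where $G$ has $m_G$ edges. Construct the 2-Layer General Transshipment instance $(D, c, \mathcal{B})$ as follows: $V(D) = V(G) \cup E(G)$ with $U = E(G)$ and $W = V(G)$; for every edge $e = \{u,v\} \in E(G)$ add the arcs $(e,u)$ and $(e,v)$ with capacity $1$; set $B_e = \{0,1\}$ for every $e \in E(G)$ and $B_v = [-\tau, 0]$ for every $v \in V(G)$. Then there is a $\mathcal{B}$-transshipment $f$ in $D$ with $\mathrm{val}(f) \ge m_G - k$ if and only if there is an edge set $F \subseteq E(G)$ with $|F| \le k$ and $\rho^*(G - F) \le \tau$.
   Context: Graphs are simple and undirected; the density of a graph with $n$ vertices and $m$ edges is $m/n$ (the empty graph has density $0$) and $\rho^*(G)$ is the maximum density of a subgraph of $G$. The problem $\tau$-Bounded-Density Edge Deletion asks, given $G$ and $k \in \mathbb{N}$, whether some $F \subseteq E(G)$ with $|F| \le k$ satisfies $\rho^*(G-F) \le \tau$. A digraph $D$ is 2-layered with parts $U, W$ if $V(D) = U \cup W$ is a disjoint union and $A(D) \subseteq U \times W$. An instance of 2-Layer General Transshipment consists of a 2-layered digraph $D$ with parts $U,W$, capacities $c: A(D) \to \mathbb{Q}_{\ge 0}$, and a collection $\mathcal{B} = \{B_v : v \in V(D)\}$ with $B_v \subseteq \mathbb{Q}_{\ge 0}$ for $v \in U$ and $B_v \subseteq \mathbb{Q}_{\le 0}$ for $v \in W$. For a function $f: A(D) \to \mathbb{Q}_{\ge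 0}$, the excess at $v$ is $f_\Sigma(v) = \sum_{(v,x) \in A(D)} f(v,x) - \sum_{(x,v) \in A(D)} f(x,v)$. A $\mathcal{B}$-transshipment is a function $f: A(D) \to \mathbb{Q}_{\ge 0}$ with $f(a) \le c(a)$ for all arcs $a$ and $f_\Sigma(v) \in B_v$ for all $v \in V(D)$. Its value is $\mathrm{val}(f) = \sum_{u \in U} f_\Sigma(u)$. The problem is to find a $\mathcal{B}$-transshipment of maximum value. *)

theory Defs
  imports Complex_Main
begin

definition simple_graph :: "'a set \<Rightarrow> 'a set set \<Rightarrow> bool" where
  "simple_graph V E \<longleftrightarrow> finite V \<and> (\<forall>e\<in>E. e \<subseteq> V \<and> card e = 2)"

definition density :: "'a set \<Rightarrow> 'a set set \<Rightarrow> rat" where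
  "density V E = (if V = {} then 0 else of_nat (card E) / of_nat (card V))"

definition rho_star :: "'a set \<Rightarrow> 'a set set \<Rightarrow> rat" where
  "rho_star V E = Max {density V' E' | V' E'. V' \<subseteq> V \<and> E' \<subseteq> E \<and> (\<forall>e\<in>E'. e \<subseteq> V')}"

definition excess :: "('v \<times> 'v) set \<Rightarrow> ('v \<times> 'v \<Rightarrow> rat) \<Rightarrow> 'v \<Rightarrow> rat" where
  "excess A f v = (\<Sum>a\<in>{a\<in>A. fst a = v}. f a) - (\<Sum>a\<in>{a\<in>A. snd a = v}. f a)"

definition is_transshipment ::
  "'v set \<Rightarrow> ('v \<times> 'v) set \<Rightarrow> ('v \<times> 'v \<Rightarrow> rat) \<Rightarrow> ('v \<Rightarrow> rat set) \<Rightarrow> ('v \<times> 'v \<Rightarrow> rat) \<Rightarrow> bool" where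
  "is_transshipment VD A c B f \<longleftrightarrow>
     (\<forall>a\<in>A. 0 \<le> f a \<and> f a \<le> c a) \<and> (\<forall>v\<in>VD. excess A f v \<in> B v)"

definition tval :: "'v set \<Rightarrow> ('v \<times> 'v) set \<Rightarrow> ('v \<times> 'v \<Rightarrow> rat) \<Rightarrow> rat" where
  "tval U A f = (\<Sum>u\<in>U. excess A f u)"

(* The constructed instance: vertices of G are Inl v, edges of G are Inr e *)
definition red_V :: "'a set \<Rightarrow> 'a set set \<Rightarrow> ('a + 'a set) set" where
  "red_V V E = Inl ` V \<union> Inr ` E"

definition red_U :: "'a set set \<Rightarrow> ('a + 'a set) set" where
  "red_U E = Inr ` E"

definition red_W :: "'a set \<Rightarrow> ('a + 'a set) set" where
  "red_W V = Inl ` V"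

definition red_A :: "'a set set \<Rightarrow> (('a + 'a set) \<times> ('a + 'a set)) set" where
  "red_A E = {(Inr e, Inl u) | e u. e \<in> E \<and> u \<in> e}"

definition red_c :: "('a + 'a set) \<times> ('a + 'a set) \<Rightarrow> rat" where
  "red_c a = 1"

definition red_B :: "rat \<Rightarrow> ('a + 'a set) \<Rightarrow> rat set" where
  "red_B \<tau> x = (case x of Inr e \<Rightarrow> {0, 1} | Inl v \<Rightarrow> {-\<tau>..0})"

end

theory Submission
  imports Defs
begin


lemma hall:
  fixes A :: "'i \<Rightarrow> 'x set"
  assumes "finite I" "\<forall>i\<in>I. finite (A i)" "\<forall>J\<subseteq>I. card J \<le> card (\<Union>(A ` J))"
  shows "\<exists>g. inj_on g I \<and> (\<forall>i\<in>I. g i \<in> A i)"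
using assms
proof (induction "card I" arbitrary: I A rule: less_induct)
  case less
  show ?case
  proof (cases "I = {}")
    case True then show ?thesis by auto
  next
    case False
    show ?thesis
    proof (cases "\<exists>J. J \<subseteq> I \<and> J \<noteq> {} \<and> J \<noteq> I \<and> card (\<Union>(A ` J)) \<le> card J")
      case True
      then obtain J where J: "J \<subseteq> I" "J \<noteq> {}" "J \<noteq> I" "card (\<Union>(A ` J)) \<le> card J" by blast
      have fJ: "finite J" using J less.prems finite_subset by blast
      have cJ: "card J < card I" using J less.prems by (meson psubset_card_mono psubsetI)
      obtain g1 where g1: "inj_on g1 J" "\<forall>i\<in>J. g1 i \<in> A i"
        using less(1)[OF cJ fJ, of A] J less.prems by auto
      define X where "X = \<Union>(A ` J)"
      have fX: "finite X" unfolding X_def using fJ J less.prems by auto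
      have cX: "card X = card J" unfolding X_def using J less.prems by (meson dual_order.antisym)
      define A2 where "A2 i = A i - X" for i
      have cIJ: "card (I - J) < card I" using J less.prems
        by (metis Diff_subset Diff_eq_empty_iff double_diff psubset_card_mono psubsetI subset_refl)
      have "\<forall>K\<subseteq>I - J. card K \<le> card (\<Union>(A2 ` K))"
      proof (intro allI impI)
        fix K assume K: "K \<subseteq> I - J"
        have fK: "finite K" using K less.prems finite_subset by blast
        have eq: "\<Union>(A2 ` K) = \<Union>(A ` (K \<union> J)) - X" unfolding A2_def X_def by auto
        have sub: "X \<subseteq> \<Union>(A ` (K \<union> J))" unfolding X_def by auto
        have fU: "finite (\<Union>(A ` (K \<union> J)))" using fK fJ K J less.prems by auto
        have "K \<union> J \<subseteq> I" using K J by auto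
        hence "card (K \<union> J) \<le> card (\<Union>(A ` (K \<union> J)))" using less.prems(3) by blast
        moreover have "card (K \<union> J) = card K + card J" using K fK fJ by (subst card_Un_disjoint) auto
        moreover have "card (\<Union>(A2 ` K)) = card (\<Union>(A ` (K \<union> J))) - card X"
          using eq sub fU by (simp add: card_Diff_subset fX)
        ultimately show "card K \<le> card (\<Union>(A2 ` K))" using cX by linarith
      qed
      then obtain g2 where g2: "inj_on g2 (I - J)" "\<forall>i\<in>I - J. g2 i \<in> A2 i"
        using less(1)[OF cIJ, of A2] less.prems unfolding A2_def by auto
      define g where "g i = (if i \<in> J then g1 i else g2 i)" for i
      have "inj_on g I"
      proof (rule inj_onI)
        fix a b assume ab: "a \<in> I" "b \<in> I" "g a = g b"
        show "a = b"
        proof (cases "a \<in> J"; cases "b \<in> J")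
          assume "a \<in> J" "b \<in> J" then show ?thesis using ab g1 unfolding g_def by (auto dest: inj_onD)
        next
          assume "a \<notin> J" "b \<notin> J" then show ?thesis using ab g2 unfolding g_def by (auto dest: inj_onD)
        next
          assume "a \<in> J" "b \<notin> J"
          then have "g a \<in> X" "g b \<notin> X" using g1 g2 ab unfolding g_def X_def A2_def by auto
          then show ?thesis using ab by simp
        next
          assume "a \<notin> J" "b \<in> J"
          then have "g b \<in> X" unfolding g_def X_def using g1 by auto
          moreover have "g a \<notin> X"
          proof -
            have "a \<in> I - J" using ab \<open>a \<notin> J\<close> by blast
            hence "g2 a \<in> A2 a" using g2 by blast
            thus ?thesis unfolding g_def A2_def using \<open>a \<notin> J\<close> by simp
          qed
          ultimately show ?thesis using ab by simp
        qed
      qed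
      moreover have "\<forall>i\<in>I. g i \<in> A i" using g1 g2 unfolding g_def A2_def by auto
      ultimately show ?thesis by blast
    next
      case False
      hence strict: "\<And>J. J \<subseteq> I \<Longrightarrow> J \<noteq> {} \<Longrightarrow> J \<noteq> I \<Longrightarrow> card J < card (\<Union>(A ` J))" by (meson not_le)
      obtain i where i: "i \<in> I" using \<open>I \<noteq> {}\<close> by blast
      have "card {i} \<le> card (A i)" using less.prems(3)[rule_format, of "{i}"] i by simp
      hence "A i \<noteq> {}" by auto
      then obtain x where x: "x \<in> A i" by blast
      define A2 where "A2 j = A j - {x}" for j
      have cI: "card (I - {i}) < card I" using i less.prems by (metis card_Diff1_less)
      have "\<forall>K\<subseteq>I - {i}. card K \<le> card (\<Union>(A2 ` K))"
      proof (intro allI impI)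
        fix K assume K: "K \<subseteq> I - {i}"
        show "card K \<le> card (\<Union>(A2 ` K))"
        proof (cases "K = {}")
          case True then show ?thesis by simp
        next
          case False
          have fK: "finite K" using K less.prems finite_subset by blast
          have "K \<noteq> I" using K i by auto
          hence lt: "card K < card (\<Union>(A ` K))" using strict K False by auto
          have eq: "\<Union>(A2 ` K) = \<Union>(A ` K) - {x}" unfolding A2_def by auto
          have "finite (\<Union>(A ` K))" using fK K less.prems by auto
          hence "card (\<Union>(A ` K)) - 1 \<le> card (\<Union>(A2 ` K))" unfolding eq
            by (simp add: card_Diff_singleton_if)
          then show ?thesis using lt by linarith
        qed
      qed
      then obtain g2 where g2: "inj_on g2 (I - {i})" "\<forall>j\<in>I - {i}. g2 j \<in> A2 j"
        using less(1)[OF cI, of A2] less.prems unfolding A2_def by auto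
      define g where "g = g2(i := x)"
      have "inj_on g (insert i (I - {i}))"
        unfolding g_def using g2 unfolding A2_def by (auto simp: inj_on_def)
      moreover have "insert i (I - {i}) = I" using i by auto
      moreover have "\<forall>j\<in>I. g j \<in> A j" using g2 x unfolding g_def A2_def by auto
      ultimately show ?thesis by auto
    qed
  qed
qed



lemma sg_finE: "simple_graph V E \<Longrightarrow> finite E"
proof -
  assume "simple_graph V E"
  hence "E \<subseteq> Pow V" "finite V" unfolding simple_graph_def by auto
  thus "finite E" using finite_subset by blast
qed

lemma sg_edge: "simple_graph V E \<Longrightarrow> e \<in> E \<Longrightarrow> e \<subseteq> V \<and> card e = 2 \<and> finite e \<and> e \<noteq> {}"
proof -
  assume "simple_graph V E" "e \<in> E"
  hence a: "e \<subseteq> V" "card e = 2" unfolding simple_graph_def by auto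
  hence "finite e" using card.infinite by fastforce
  moreover have "e \<noteq> {}" using a by auto
  ultimately show ?thesis using a by blast
qed

lemma dens_set_fin:
  assumes "simple_graph V E" "E' \<subseteq> E"
  shows "finite {density V' E'' | V' E''. V' \<subseteq> V \<and> E'' \<subseteq> E' \<and> (\<forall>e\<in>E''. e \<subseteq> V')}"
proof -
  have "{density V' E'' | V' E''. V' \<subseteq> V \<and> E'' \<subseteq> E' \<and> (\<forall>e\<in>E''. e \<subseteq> V')}
     \<subseteq> (\<lambda>(a,b). density a b) ` (Pow V \<times> Pow E')" by auto
  moreover have "finite (Pow V \<times> Pow E')" using assms sg_finE[OF assms(1)] finite_subset
    unfolding simple_graph_def by blast
  ultimately show ?thesis by (meson finite_imageI finite_subset)
qed

lemma dens_le_rho: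
  assumes "simple_graph V E" "E' \<subseteq> E" "V' \<subseteq> V" "E'' \<subseteq> E'" "\<forall>e\<in>E''. e \<subseteq> V'"
  shows "density V' E'' \<le> rho_star V E'"
  unfolding rho_star_def using assms dens_set_fin[OF assms(1,2)] by (intro Max_ge) auto

lemma rho_le:
  assumes "simple_graph V E" "E' \<subseteq> E"
    "\<And>V' E''. V' \<subseteq> V \<Longrightarrow> E'' \<subseteq> E' \<Longrightarrow> (\<forall>e\<in>E''. e \<subseteq> V') \<Longrightarrow> density V' E'' \<le> t"
  shows "rho_star V E' \<le> t"
  unfolding rho_star_def using assms dens_set_fin[OF assms(1,2)]
  by (subst Max_le_iff) blast+

lemma red_A_mem: "a \<in> red_A E \<longleftrightarrow> (\<exists>e u. a = (Inr e, Inl u) \<and> e \<in> E \<and> u \<in> e)"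
  unfolding red_A_def by simp

lemma arcs_fst_Inr: fixes E :: "'a set set" shows "{a\<in>red_A E. fst a = Inr e} = (if e \<in> E then (\<lambda>u. (Inr e, Inl u)) ` e else {})"
proof (intro set_eqI iffI)
  fix a :: "('a + 'a set) \<times> ('a + 'a set)" assume "a \<in> {a\<in>red_A E. fst a = Inr e}"
  then obtain e' u where a: "a = (Inr e', Inl u)" "e' \<in> E" "u \<in> e'" "fst a = Inr e"
    unfolding red_A_mem by auto
  hence "e' = e" by simp
  thus "a \<in> (if e \<in> E then (\<lambda>u. (Inr e, Inl u)) ` e else {})" using a by simp
next
  fix a :: "('a + 'a set) \<times> ('a + 'a set)" assume "a \<in> (if e \<in> E then (\<lambda>u. (Inr e, Inl u)) ` e else {})"
  then obtain u where "e \<in> E" "u \<in> e" "a = (Inr e, Inl u)" by (auto split: if_splits)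
  thus "a \<in> {a\<in>red_A E. fst a = Inr e}" unfolding red_A_mem by simp
qed

lemma arcs_snd_Inr: "{a\<in>red_A E. snd a = Inr e} = {}"
  unfolding red_A_mem by auto
lemma arcs_fst_Inl: "{a\<in>red_A E. fst a = Inl v} = {}"
  unfolding red_A_mem by auto

lemma arcs_snd_Inl: fixes E :: "'a set set" shows "{a\<in>red_A E. snd a = Inl v} = (\<lambda>e. (Inr e, Inl v)) ` {e\<in>E. v \<in> e}"
proof (intro set_eqI iffI)
  fix a :: "('a + 'a set) \<times> ('a + 'a set)" assume "a \<in> {a\<in>red_A E. snd a = Inl v}"
  then obtain e u where a: "a = (Inr e, Inl u)" "e \<in> E" "u \<in> e" "snd a = Inl v"
    unfolding red_A_mem by auto
  hence "u = v" by simp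
  thus "a \<in> (\<lambda>e. (Inr e, Inl v)) ` {e\<in>E. v \<in> e}" using a by simp
next
  fix a :: "('a + 'a set) \<times> ('a + 'a set)" assume "a \<in> (\<lambda>e. (Inr e, Inl v)) ` {e\<in>E. v \<in> e}"
  then obtain e where "e \<in> E" "v \<in> e" "a = (Inr e, Inl v)" by auto
  thus "a \<in> {a\<in>red_A E. snd a = Inl v}" unfolding red_A_mem by simp
qed

lemma exc_Inr: "e \<in> E \<Longrightarrow> excess (red_A E) f (Inr e) = (\<Sum>u\<in>e. f (Inr e, Inl u))"
  unfolding excess_def arcs_fst_Inr arcs_snd_Inr
  by (simp add: sum.reindex inj_on_def)

lemma exc_Inl: "excess (red_A E) f (Inl v) = - (\<Sum>e\<in>{e\<in>E. v \<in> e}. f (Inr e, Inl v))"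
  unfolding excess_def arcs_fst_Inl arcs_snd_Inl
  by (simp add: sum.reindex inj_on_def)

lemma tval_eq: "tval (red_U E) (red_A E) f = (\<Sum>e\<in>E. \<Sum>u\<in>e. f (Inr e, Inl u))"
  unfolding tval_def red_U_def
  by (simp add: sum.reindex exc_Inr)



lemma fwd:
  assumes sg: "simple_graph V E" and tau: "\<tau> \<ge> 0"
    and tr: "is_transshipment (red_V V E) (red_A E) red_c (red_B \<tau>) f"
    and val: "tval (red_U E) (red_A E) f \<ge> of_nat (card E) - of_nat k"
  shows "\<exists>F. F \<subseteq> E \<and> card F \<le> k \<and> rho_star V (E - F) \<le> \<tau>"
proof -
  define h where "h e u = f (Inr e, Inl u)" for e u
  define s where "s e = (\<Sum>u\<in>e. h e u)" for e
  have finE: "finite E" using sg_finE[OF sg] .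
  have hnn: "h e u \<ge> 0" if "e \<in> E" "u \<in> e" for e u
  proof -
    have "(Inr e, Inl u) \<in> red_A E" unfolding red_A_def using that by blast
    thus ?thesis using tr unfolding is_transshipment_def h_def by blast
  qed
  have s01: "s e = 0 \<or> s e = 1" if "e \<in> E" for e
  proof -
    have "Inr e \<in> red_V V E" using that unfolding red_V_def by auto
    hence "excess (red_A E) f (Inr e) \<in> red_B \<tau> (Inr e)" using tr unfolding is_transshipment_def by blast
    thus ?thesis using exc_Inr[OF that] unfolding s_def h_def red_B_def by auto
  qed
  have vt: "(\<Sum>e\<in>{e\<in>E. v \<in> e}. h e v) \<le> \<tau>" if "v \<in> V" for v
  proof -
    have "Inl v \<in> red_V V E" using that unfolding red_V_def by auto
    hence "excess (red_A E) f (Inl v) \<in> red_B \<tau> (Inl v)" using tr unfolding is_transshipment_def by blast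
    thus ?thesis using exc_Inl[of E f v] unfolding h_def red_B_def by auto
  qed
  define F where "F = {e\<in>E. s e = 0}"
  have FE: "F \<subseteq> E" unfolding F_def by auto
  have "tval (red_U E) (red_A E) f = (\<Sum>e\<in>E. s e)" unfolding tval_eq s_def h_def ..
  also have "\<dots> = (\<Sum>e\<in>E. if e \<in> E - F then 1 else 0)"
    using s01 unfolding F_def by (intro sum.cong) auto
  also have "\<dots> = (\<Sum>e\<in>E \<inter> (E - F). 1)"
    using sum.inter_restrict[OF finE, of "\<lambda>_. 1::rat" "E - F"] by simp
  also have "E \<inter> (E - F) = E - F" by blast
  also have "(\<Sum>e\<in>E - F. (1::rat)) = of_nat (card (E - F))" by simp
  finally have "of_nat (card E) - of_nat k \<le> (of_nat (card (E - F)) :: rat)" using val by simp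
  moreover have "card (E - F) = card E - card F" using FE finE by (simp add: card_Diff_subset finite_subset)
  moreover have "card F \<le> card E" using FE finE by (simp add: card_mono)
  ultimately have cF: "card F \<le> k" by (simp add: of_nat_diff)
  have "rho_star V (E - F) \<le> \<tau>"
  proof (rule rho_le[OF sg])
    show "E - F \<subseteq> E" by auto
  next
    fix V' E'' assume V': "V' \<subseteq> V" and E'': "E'' \<subseteq> E - F" and ins: "\<forall>e\<in>E''. e \<subseteq> V'"
    show "density V' E'' \<le> \<tau>"
    proof (cases "V' = {}")
      case True then show ?thesis using tau unfolding density_def by simp
    next
      case False
      have "finite V" using sg unfolding simple_graph_def by simp
      hence finV': "finite V'" using V' by (rule finite_subset[rotated])
      have "E'' \<subseteq> E" using E'' by blast
      hence finE'': "finite E''" using finE by (rule finite_subset)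
      have s1: "s e = 1" if "e \<in> E''" for e
      proof -
        have "e \<in> E" "s e \<noteq> 0" using E'' that unfolding F_def by auto
        thus ?thesis using s01[of e] by auto
      qed
      have "of_nat (card E'') = (\<Sum>e\<in>E''. (1::rat))" by simp
      also have "\<dots> = (\<Sum>e\<in>E''. s e)" using s1 by (intro sum.cong) auto
      also have "\<dots> = (\<Sum>e\<in>E''. \<Sum>u\<in>V'. if u \<in> e then h e u else 0)"
      proof (intro sum.cong refl)
        fix e assume "e \<in> E''"
        hence "V' \<inter> e = e" using ins by auto
        thus "s e = (\<Sum>u\<in>V'. if u \<in> e then h e u else 0)"
          unfolding s_def using sum.inter_restrict[OF finV', of "h e" e] by simp
      qed
      also have "\<dots> = (\<Sum>u\<in>V'. \<Sum>e\<in>E''. if u \<in> e then h e u else 0)"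
        by (rule sum.swap)
      also have "\<dots> = (\<Sum>u\<in>V'. \<Sum>e\<in>{e\<in>E''. u \<in> e}. h e u)"
        using finE'' by (simp add: sum.inter_filter)
      also have "\<dots> \<le> (\<Sum>u\<in>V'. \<Sum>e\<in>{e\<in>E. u \<in> e}. h e u)"
        using E'' finE hnn by (intro sum_mono sum_mono2) auto
      also have "\<dots> \<le> (\<Sum>u\<in>V'. \<tau>)"
        using V' vt by (intro sum_mono) auto
      also have "\<dots> = \<tau> * of_nat (card V')" by simp
      finally have "of_nat (card E'') \<le> \<tau> * of_nat (card V')" .
      moreover have "card V' > 0" using False finV' by auto
      ultimately have "of_nat (card E'') / of_nat (card V') \<le> \<tau>"
        by (simp add: pos_divide_le_eq mult.commute)
      thus ?thesis unfolding density_def using False by simp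
    qed
  qed
  thus ?thesis using FE cF by blast
qed



lemma bwd:
  assumes sg: "simple_graph V E" and tau: "\<tau> \<ge> 0"
    and FE: "F \<subseteq> E" and cF: "card F \<le> k" and rho: "rho_star V (E - F) \<le> \<tau>"
  shows "\<exists>f. is_transshipment (red_V V E) (red_A E) red_c (red_B \<tau>) f \<and>
              tval (red_U E) (red_A E) f \<ge> of_nat (card E) - of_nat k"
proof -
  have finE: "finite E" using sg_finE[OF sg] .
  have finV: "finite V" using sg unfolding simple_graph_def by simp
  obtain p q where pq: "quotient_of \<tau> = (p, q)" by (cases "quotient_of \<tau>") auto
  have tq: "\<tau> = of_int p / of_int q" using quotient_of_div[OF pq] .
  have qpos: "q > 0" using quotient_of_denom_pos[OF pq] .
  have ppos: "p \<ge> 0"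
  proof (rule ccontr)
    assume "\<not> p \<ge> 0"
    hence "(of_int p :: rat) < 0" by simp
    moreover have "(of_int q :: rat) > 0" using qpos by simp
    ultimately have "\<tau> < 0" unfolding tq by (simp add: divide_neg_pos)
    thus False using tau by simp
  qed
  define P where "P = nat p"
  define Q where "Q = nat q"
  have Qpos: "Q > 0" using qpos unfolding Q_def by simp
  have tPQ: "\<tau> = of_nat P / of_nat Q" unfolding tq P_def Q_def using ppos qpos by simp
  define E' where "E' = E - F"
  have E'E: "E' \<subseteq> E" unfolding E'_def by auto
  have finE': "finite E'" using finE E'E finite_subset by blast
  define I where "I = E' \<times> {..<Q}"
  define A where "A x = fst x \<times> {..<P}" for x :: "'a set \<times> nat"
  have finI: "finite I" unfolding I_def using finE' by simp
  have finA: "\<forall>x\<in>I. finite (A x)"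
  proof
    fix x assume "x \<in> I"
    hence "fst x \<in> E" unfolding I_def using E'E by auto
    thus "finite (A x)" unfolding A_def using sg_edge[OF sg] by simp
  qed
  have hallc: "\<forall>J\<subseteq>I. card J \<le> card (\<Union>(A ` J))"
  proof (intro allI impI)
    fix J assume J: "J \<subseteq> I"
    define S where "S = fst ` J"
    have SE': "S \<subseteq> E'" unfolding S_def using J unfolding I_def by auto
    have finS: "finite S" using SE' finE' finite_subset by blast
    have "J \<subseteq> S \<times> {..<Q}" unfolding S_def using J unfolding I_def by force
    hence cJ: "card J \<le> card S * Q" using finS by (metis card_cartesian_product card_lessThan card_mono finite_SigmaI finite_lessThan)
    have UA: "\<Union>(A ` J) = (\<Union>S) \<times> {..<P}" unfolding A_def S_def by auto
    have UV: "\<Union>S \<subseteq> V" using SE' E'E sg_edge[OF sg] by blast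
    have finU: "finite (\<Union>S)" using UV finV finite_subset by blast
    have cU: "card (\<Union>(A ` J)) = card (\<Union>S) * P" unfolding UA by (simp add: card_cartesian_product)
    show "card J \<le> card (\<Union>(A ` J))"
    proof (cases "\<Union>S = {}")
      case True
      have "S = {}"
      proof (rule ccontr)
        assume "S \<noteq> {}"
        then obtain e where "e \<in> S" by blast
        hence "e \<noteq> {}" using SE' E'E sg_edge[OF sg] by blast
        thus False using True \<open>e \<in> S\<close> by blast
      qed
      thus ?thesis using cJ by simp
    next
      case False
      have "density (\<Union>S) S \<le> rho_star V E'"
        using dens_le_rho[OF sg E'E UV SE'] by blast
      hence d: "of_nat (card S) / of_nat (card (\<Union>S)) \<le> (of_nat P / of_nat Q :: rat)"
        using rho False unfolding density_def E'_def tPQ by (simp only: if_False)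
      have cpos: "card (\<Union>S) > 0" using False finU by auto
      have "of_nat (card S) \<le> (of_nat P / of_nat Q :: rat) * of_nat (card (\<Union>S))"
        using d cpos by (simp add: pos_divide_le_eq)
      hence "of_nat (card S) * of_nat Q \<le> (of_nat P * of_nat (card (\<Union>S)) :: rat)"
        using Qpos by (simp add: field_simps)
      hence "card S * Q \<le> card (\<Union>S) * P"
        by (metis of_nat_le_iff of_nat_mult mult.commute)
      thus ?thesis using cJ cU by linarith
    qed
  qed
  obtain g where ginj: "inj_on g I" and gA: "\<forall>x\<in>I. g x \<in> A x"
    using hall[OF finI finA hallc] by blast
  have gmem: "fst (g (e, i)) \<in> e" if "e \<in> E'" "i < Q" for e i
    using gA that unfolding I_def A_def by force
  define cnt where "cnt e u = (\<Sum>i<Q. if fst (g (e, i)) = u then 1 else 0 :: rat)" for e u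
  define H where "H e u = (if e \<in> E' then cnt e u / of_nat Q else 0)" for e u
  define f where "f a = (case a of (Inr e, Inl u) \<Rightarrow> H e u | _ \<Rightarrow> 0)" for a :: "('a + 'a set) \<times> ('a + 'a set)"
  have fH: "f (Inr e, Inl u) = H e u" for e u unfolding f_def by simp
  have cnt_nn: "cnt e u \<ge> 0" for e u unfolding cnt_def by (intro sum_nonneg) auto
  have cnt_le: "cnt e u \<le> of_nat Q" for e u
  proof -
    have "cnt e u \<le> (\<Sum>i<Q. (1::rat))" unfolding cnt_def by (intro sum_mono) auto
    thus ?thesis by simp
  qed
  have H_nn: "H e u \<ge> 0" for e u unfolding H_def using cnt_nn by simp
  have H_le: "H e u \<le> 1" for e u unfolding H_def using cnt_le Qpos by (simp add: divide_le_eq)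
  have sum_cnt: "(\<Sum>u\<in>e. cnt e u) = of_nat Q" if "e \<in> E'" for e
  proof -
    have fe: "finite e" using that E'E sg_edge[OF sg] by blast
    have "(\<Sum>u\<in>e. cnt e u) = (\<Sum>i<Q. \<Sum>u\<in>e. if fst (g (e, i)) = u then 1 else 0 :: rat)"
      unfolding cnt_def by (rule sum.swap)
    also have "\<dots> = (\<Sum>i<Q. (1::rat))"
      using fe gmem[OF that] by (intro sum.cong refl) simp
    finally show ?thesis by simp
  qed
  have sumH: "(\<Sum>u\<in>e. H e u) = (if e \<in> E' then 1 else 0)" for e
  proof (cases "e \<in> E'")
    case True
    have "(\<Sum>u\<in>e. H e u) = (\<Sum>u\<in>e. cnt e u) / of_nat Q"
      unfolding H_def using True by (simp add: sum_divide_distrib)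
    thus ?thesis using sum_cnt[OF True] Qpos True by simp
  next
    case False thus ?thesis unfolding H_def by simp
  qed
  have vert: "(\<Sum>e\<in>{e\<in>E. v \<in> e}. H e v) \<le> \<tau>" for v
  proof -
    have "(\<Sum>e\<in>{e\<in>E. v \<in> e}. H e v) \<le> (\<Sum>e\<in>E. H e v)"
      using finE H_nn by (intro sum_mono2) auto
    also have "\<dots> = (\<Sum>e\<in>E. if e \<in> E' then cnt e v / of_nat Q else 0)" unfolding H_def ..
    also have "\<dots> = (\<Sum>e\<in>E \<inter> E'. cnt e v / of_nat Q)"
      using sum.inter_restrict[OF finE, of "\<lambda>e. cnt e v / of_nat Q" E'] by simp
    also have "E \<inter> E' = E'" using E'E by blast
    also have "(\<Sum>e\<in>E'. cnt e v / of_nat Q) = (\<Sum>e\<in>E'. cnt e v) / of_nat Q"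
      by (simp add: sum_divide_distrib)
    also have "(\<Sum>e\<in>E'. cnt e v) = (\<Sum>x\<in>I. if fst (g x) = v then 1 else 0)"
      unfolding cnt_def I_def sum.cartesian_product by (intro sum.cong refl) auto
    also have "\<dots> = (\<Sum>x\<in>{x\<in>I. fst (g x) = v}. 1)"
      using sum.inter_filter[OF finI, of "\<lambda>_. 1::rat" "\<lambda>x. fst (g x) = v"] by simp
    also have "\<dots> = of_nat (card {x\<in>I. fst (g x) = v})" by simp
    also have "card {x\<in>I. fst (g x) = v} \<le> card ({v} \<times> {..<P})"
    proof (rule card_inj_on_le)
      show "inj_on g {x\<in>I. fst (g x) = v}" using ginj by (rule inj_on_subset) auto
      show "g ` {x\<in>I. fst (g x) = v} \<subseteq> {v} \<times> {..<P}"
      proof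
        fix y assume "y \<in> g ` {x\<in>I. fst (g x) = v}"
        then obtain x where x: "x \<in> I" "fst (g x) = v" "y = g x" by blast
        have "g x \<in> A x" using gA x by blast
        thus "y \<in> {v} \<times> {..<P}" using x unfolding A_def by (cases "g x") auto
      qed
      show "finite ({v} \<times> {..<P})" by simp
    qed
    hence "(of_nat (card {x\<in>I. fst (g x) = v}) :: rat) \<le> of_nat P"
      by (simp add: card_cartesian_product)
    hence "(of_nat (card {x\<in>I. fst (g x) = v}) :: rat) / of_nat Q \<le> of_nat P / of_nat Q"
      using Qpos by (simp add: divide_right_mono)
    finally show ?thesis unfolding tPQ .
  qed
  have tr: "is_transshipment (red_V V E) (red_A E) red_c (red_B \<tau>) f"
  proof -
  have t1: "\<forall>a\<in>red_A E. 0 \<le> f a \<and> f a \<le> red_c a"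
  proof
    fix a assume "a \<in> red_A E"
    then obtain e u where "a = (Inr e, Inl u)" unfolding red_A_mem by blast
    thus "0 \<le> f a \<and> f a \<le> red_c a" using H_nn H_le fH unfolding red_c_def by simp
  qed
  have t2: "\<forall>x\<in>red_V V E. excess (red_A E) f x \<in> red_B \<tau> x"
  proof
    fix x assume "x \<in> red_V V E"
    hence "(\<exists>v. x = Inl v) \<or> (\<exists>e\<in>E. x = Inr e)" unfolding red_V_def by blast
    thus "excess (red_A E) f x \<in> red_B \<tau> x"
    proof
      assume "\<exists>v. x = Inl v"
      then obtain v where x: "x = Inl v" by blast
      have "0 \<le> (\<Sum>e\<in>{e\<in>E. v \<in> e}. H e v)" using H_nn by (intro sum_nonneg) auto
      thus ?thesis using vert[of v] unfolding x exc_Inl red_B_def fH by simp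
    next
      assume "\<exists>e\<in>E. x = Inr e"
      then obtain e where e: "e \<in> E" "x = Inr e" by blast
      show ?thesis unfolding e(2) exc_Inr[OF e(1)] red_B_def fH sumH by simp
    qed
  qed
  show ?thesis unfolding is_transshipment_def using t1 t2 by blast
  qed
  have "tval (red_U E) (red_A E) f = (\<Sum>e\<in>E. if e \<in> E' then 1 else 0)"
    unfolding tval_eq fH sumH ..
  also have "\<dots> = (\<Sum>e\<in>E \<inter> E'. 1)"
    using sum.inter_restrict[OF finE, of "\<lambda>_. 1::rat" E'] by simp
  also have "E \<inter> E' = E'" using E'E by blast
  also have "(\<Sum>e\<in>E'. (1::rat)) = of_nat (card E')" by simp
  also have "card E' = card E - card F" unfolding E'_def using FE finE by (simp add: card_Diff_subset finite_subset)
  finally have "tval (red_U E) (red_A E) f = of_nat (card E - card F)" .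
  moreover have "card F \<le> card E" using FE finE by (simp add: card_mono)
  ultimately have "tval (red_U E) (red_A E) f \<ge> of_nat (card E) - of_nat k"
    using cF by (simp add: of_nat_diff)
  thus ?thesis using tr by blast
qed


theorem lemma6:
  fixes V :: "'a set" and E :: "'a set set" and \<tau> :: rat and k :: nat
  assumes "simple_graph V E" and "\<tau> \<ge> 0"
  shows "(\<exists>f. is_transshipment (red_V V E) (red_A E) red_c (red_B \<tau>) f \<and>
              tval (red_U E) (red_A E) f \<ge> of_nat (card E) - of_nat k)
     \<longleftrightarrow> (\<exists>F. F \<subseteq> E \<and> card F \<le> k \<and> rho_star V (E - F) \<le> \<tau>)"
  using fwd[OF assms] bwd[OF assms] by blast

end
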